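(* For every integer $\chi\geq 3$, $\vec{R}(\chi)\geq \vec{R}(\chi-1)+2$.
   Context: $TT_\ell$ denotes the transitive (acyclic) tournament on $\ell$ vertices, and $\vec{R}(\ell)$ is the least integer $N$ such that every tournament on at least $N$ vertices contains a copy of $TT_\ell$. *)

theory Defs
  imports Main
begin

definition tournament :: "'a set \<Rightarrow> ('a \<Rightarrow> 'a \<Rightarrow> bool) \<Rightarrow> bool" where
  "tournament V T \<longleftrightarrow> finite V \<and>
     (\<forall>u v. T u v \<longrightarrow> u \<in> V \<and> v \<in> V) \<and>
     (\<forall>v\<in>V. \<not> T v v) \<and>
     (\<forall>u\<in>V. \<forall>v\<in>V. u \<noteq> v \<longrightarrow> (T u v \<longleftrightarrow> \<not> T v u))"

definition contains_TT :: "'a set \<Rightarrow> ('a \<Rightarrow> 'a \<Rightarrow> bool) \<Rightarrow> nat \<Rightarrow> bool" where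
  "contains_TT V T l \<longleftrightarrow> (\<exists>f. inj_on f {0..<l} \<and> f ` {0..<l} \<subseteq> V \<and>
     (\<forall>i<l. \<forall>j<l. i < j \<longrightarrow> T (f i) (f j)))"

text \<open>Directed Ramsey number: least N such that every tournament on at least N
  vertices contains TT_l. Vertices are taken from nat (any countable supply suffices).\<close>
definition dir_ramsey :: "nat \<Rightarrow> nat" where
  "dir_ramsey l = (LEAST N. \<forall>(V::nat set) T. tournament V T \<and> card V \<ge> N \<longrightarrow> contains_TT V T l)"

end

theory Submission
  imports Defs
begin

lemma tt_exists:
  "finite S \<Longrightarrow> (\<forall>u\<in>S. \<forall>v\<in>S. u\<noteq>v \<longrightarrow> T u v \<or> T v u) \<Longrightarrow> card S \<ge> 2^l \<Longrightarrow>
   \<exists>f. inj_on f {0..<Suc l} \<and> f`{0..<Suc l} \<subseteq> S \<and> (\<forall>i<Suc l. \<forall>j<Suc l. i<j \<longrightarrow> T (f i) (f j))"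
proof (induction l arbitrary: S)
  case 0
  then obtain v where "v \<in> S" by fastforce
  then show ?case by (rule_tac x="\<lambda>_. v" in exI) auto
next
  case (Suc l)
  from Suc.prems have "S \<noteq> {}" by (metis card.empty le_zero_eq power_not_zero zero_neq_numeral)
  then obtain v where v: "v \<in> S" by blast
  define Ou where "Ou = {u\<in>S. u\<noteq>v \<and> T v u}"
  define I where "I = {u\<in>S. u\<noteq>v \<and> \<not> T v u}"
  have un: "Ou \<union> I = S - {v}" and dj: "Ou \<inter> I = {}" unfolding Ou_def I_def by auto
  have fO: "finite Ou" "finite I" using Suc.prems(1) unfolding Ou_def I_def by auto
  have "card Ou + card I = card S - 1"
    using card_Un_disjoint[OF fO dj] un v Suc.prems(1) by simp
  hence "card Ou \<ge> 2^l \<or> card I \<ge> 2^l" using Suc.prems(3) by auto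
  then show ?case
  proof
    assume c: "card Ou \<ge> 2^l"
    have tot: "\<forall>u\<in>Ou. \<forall>w\<in>Ou. u\<noteq>w \<longrightarrow> T u w \<or> T w u" using Suc.prems(2) unfolding Ou_def by auto
    obtain f where f: "inj_on f {0..<Suc l}" "f`{0..<Suc l} \<subseteq> Ou"
      "\<forall>i<Suc l. \<forall>j<Suc l. i<j \<longrightarrow> T (f i) (f j)" using Suc.IH[OF fO(1) tot c] by (elim exE conjE)
    have fv: "\<And>i. i < Suc l \<Longrightarrow> f i \<noteq> v \<and> f i \<in> S \<and> T v (f i)"
    proof -
      fix i assume "i < Suc l"
      then have "f i \<in> Ou" using f(2) by auto
      then show "f i \<noteq> v \<and> f i \<in> S \<and> T v (f i)" unfolding Ou_def by auto
    qed
    define g where "g = (\<lambda>i. if i = 0 then v else f (i - 1))"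
    have "inj_on g {0..<Suc (Suc l)}"
    proof (rule inj_onI)
      fix a b assume ab: "a \<in> {0..<Suc (Suc l)}" "b \<in> {0..<Suc (Suc l)}" "g a = g b"
      show "a = b"
      proof (cases "a = 0"; cases "b = 0")
        assume "a \<noteq> 0" "b \<noteq> 0"
        then have "f (a-1) = f (b-1)" "a - 1 \<in> {0..<Suc l}" "b - 1 \<in> {0..<Suc l}" using ab unfolding g_def by auto
        then have "a - 1 = b - 1" using f(1) by (meson inj_onD)
        then show ?thesis using \<open>a \<noteq> 0\<close> \<open>b \<noteq> 0\<close> by simp
      next
        assume "a = 0" "b \<noteq> 0"
        then have "b - 1 < Suc l" "g b = f (b - 1)" "g a = v" using ab by (auto simp: g_def)
        then show ?thesis using fv[of "b-1"] ab(3) by simp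
      next
        assume "a \<noteq> 0" "b = 0"
        then have "a - 1 < Suc l" "g a = f (a - 1)" "g b = v" using ab by (auto simp: g_def)
        then show ?thesis using fv[of "a-1"] ab(3) by simp
      qed simp
    qed
    moreover have "g`{0..<Suc (Suc l)} \<subseteq> S" unfolding g_def using fv v by auto
    moreover have "\<forall>i<Suc (Suc l). \<forall>j<Suc (Suc l). i<j \<longrightarrow> T (g i) (g j)"
    proof (intro allI impI)
      fix i j assume "i < Suc (Suc l)" "j < Suc (Suc l)" "i < j"
      then show "T (g i) (g j)"
      proof (cases "i = 0")
        case True
        then show ?thesis using fv[of "j-1"] \<open>j < Suc (Suc l)\<close> \<open>i < j\<close> by (simp add: g_def)
      next
        case False
        then have "i - 1 < j - 1" "j - 1 < Suc l" using \<open>j < Suc (Suc l)\<close> \<open>i < j\<close> by auto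
        then show ?thesis using f(3) False \<open>i < j\<close> by (simp add: g_def)
      qed
    qed
    ultimately show ?thesis by blast
  next
    assume c: "card I \<ge> 2^l"
    have tot: "\<forall>u\<in>I. \<forall>w\<in>I. u\<noteq>w \<longrightarrow> T u w \<or> T w u" using Suc.prems(2) unfolding I_def by auto
    obtain f where f: "inj_on f {0..<Suc l}" "f`{0..<Suc l} \<subseteq> I"
      "\<forall>i<Suc l. \<forall>j<Suc l. i<j \<longrightarrow> T (f i) (f j)" using Suc.IH[OF fO(2) tot c] by (elim exE conjE)
    have fv: "\<And>i. i < Suc l \<Longrightarrow> f i \<noteq> v \<and> f i \<in> S \<and> T (f i) v"
    proof -
      fix i assume "i < Suc l"
      then have "f i \<in> I" using f(2) by auto
      then show "f i \<noteq> v \<and> f i \<in> S \<and> T (f i) v" using Suc.prems(2) v unfolding I_def by auto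
    qed
    define g where "g = (\<lambda>i. if i = Suc l then v else f i)"
    have "inj_on g {0..<Suc (Suc l)}"
    proof (rule inj_onI)
      fix a b assume ab: "a \<in> {0..<Suc (Suc l)}" "b \<in> {0..<Suc (Suc l)}" "g a = g b"
      show "a = b"
      proof (cases "a = Suc l"; cases "b = Suc l")
        assume "a \<noteq> Suc l" "b \<noteq> Suc l"
        then have "f a = f b" "a \<in> {0..<Suc l}" "b \<in> {0..<Suc l}" using ab unfolding g_def by auto
        then show ?thesis using f(1) by (meson inj_onD)
      next
        assume "a = Suc l" "b \<noteq> Suc l"
        then have "b < Suc l" "g b = f b" "g a = v" using ab by (auto simp: g_def)
        then show ?thesis using fv[of "b"] ab(3) by simp
      next
        assume "a \<noteq> Suc l" "b = Suc l"
        then have "a < Suc l" "g a = f a" "g b = v" using ab by (auto simp: g_def)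
        then show ?thesis using fv[of "a"] ab(3) by simp
      qed simp
    qed
    moreover have "g`{0..<Suc (Suc l)} \<subseteq> S" unfolding g_def using fv v by (auto simp: less_Suc_eq)
    moreover have "\<forall>i<Suc (Suc l). \<forall>j<Suc (Suc l). i<j \<longrightarrow> T (g i) (g j)"
      unfolding g_def using fv f(3) by (auto simp: less_Suc_eq)
    ultimately show ?thesis by blast
  qed
qed

lemma key_no_TT:
  assumes tV: "tournament V T" and noTT: "\<not> contains_TT V T k" and k: "k \<ge> 2"
    and xV: "x \<notin> V" and yV: "y \<notin> V" and xy: "x \<noteq> y"
    and T'_def: "T' = (\<lambda>u w. T u w \<or> (u = x \<and> w \<in> V) \<or> (u \<in> V \<and> w = y) \<or> (u = y \<and> w = x))"
  shows "\<not> contains_TT (insert x (insert y V)) T' (Suc k)"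
proof
  have TV: "\<And>u w. T u w \<Longrightarrow> u \<in> V \<and> w \<in> V" using tV unfolding tournament_def by blast
  have Tx: "\<And>u. T' u x \<longleftrightarrow> u = y" unfolding T'_def using TV xV xy by blast
  have Ty: "\<And>w. T' y w \<longleftrightarrow> w = x" unfolding T'_def using TV yV xy by blast
  have TVV: "\<And>u w. u \<in> V \<Longrightarrow> w \<in> V \<Longrightarrow> T' u w \<longleftrightarrow> T u w" unfolding T'_def using xV yV by blast
  assume "contains_TT (insert x (insert y V)) T' (Suc k)"
  then obtain f where inj: "inj_on f {0..<Suc k}" and img: "f ` {0..<Suc k} \<subseteq> insert x (insert y V)"
    and tr: "\<forall>i<Suc k. \<forall>j<Suc k. i < j \<longrightarrow> T' (f i) (f j)" unfolding contains_TT_def by blast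
  have injD: "\<And>i j. i < Suc k \<Longrightarrow> j < Suc k \<Longrightarrow> f i = f j \<Longrightarrow> i = j" using inj by (simp add: inj_on_def)
  have imgD: "\<And>i. i < Suc k \<Longrightarrow> f i \<in> V \<or> f i = x \<or> f i = y"
  proof -
    fix i assume "i < Suc k"
    then have "f i \<in> f ` {0..<Suc k}" by simp
    then show "f i \<in> V \<or> f i = x \<or> f i = y" using img by blast
  qed
  have trD: "\<And>i j. i < Suc k \<Longrightarrow> j < Suc k \<Longrightarrow> i < j \<Longrightarrow> T' (f i) (f j)" using tr by blast
  show False
  proof (cases "\<exists>i<Suc k. f i = x"; cases "\<exists>i<Suc k. f i = y")
    assume "\<exists>i<Suc k. f i = x" "\<exists>i<Suc k. f i = y"
    then obtain i m where i: "i < Suc k" "f i = x" and m: "m < Suc k" "f m = y" by blast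
    have "i \<noteq> m" using i m xy by auto
    have nxy: "\<not> T' x y" unfolding T'_def using TV xV yV xy by blast
    have "\<not> i < m" using trD[OF i(1) m(1)] i(2) m(2) nxy by blast
    then have mi: "m < i" using \<open>i \<noteq> m\<close> by simp
    obtain j where j: "j < 3" "j \<noteq> i" "j \<noteq> m"
      by (metis less_numeral_extra(3) numeral_less_iff semiring_norm(77) semiring_norm(79) zero_less_numeral not_less_iff_gr_or_eq lessI numeral_3_eq_3 One_nat_def less_Suc_eq)
    have jk: "j < Suc k" using j k by simp
    show False
    proof (cases "j < i")
      case True
      then have "f j = y" using trD[OF jk i(1)] i Tx by simp
      then show False using injD[OF jk m(1)] m j by simp
    next
      case False
      then have "m < j" using mi j by simp
      then have "f j = x" using trD[OF m(1) jk] m Ty by simp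
      then show False using injD[OF jk i(1)] i j by simp
    qed
  next
    assume nx: "\<exists>i<Suc k. f i = x" and ny: "\<not> (\<exists>i<Suc k. f i = y)"
    then obtain i where i: "i < Suc k" "f i = x" by blast
    have i0: "i = 0"
    proof (rule ccontr)
      assume "i \<noteq> 0"
      then have "T' (f 0) x" using trD[of 0 i] i by simp
      then show False using Tx ny i by auto
    qed
    have "contains_TT V T k" unfolding contains_TT_def
    proof (intro exI conjI)
      show "inj_on (\<lambda>j. f (Suc j)) {0..<k}" unfolding inj_on_def
        using injD by (metis Suc_inject Suc_mono atLeastLessThan_iff)
      have inV: "\<And>j. j < k \<Longrightarrow> f (Suc j) \<in> V"
      proof -
        fix j assume "j < k"
        then have "f (Suc j) \<noteq> x" using injD[of "Suc j" 0] i i0 by auto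
        moreover have "f (Suc j) \<noteq> y" using ny \<open>j < k\<close> by auto
        ultimately show "f (Suc j) \<in> V" using imgD[of "Suc j"] \<open>j < k\<close> by auto
      qed
      then show "(\<lambda>j. f (Suc j)) ` {0..<k} \<subseteq> V" by auto
      show "\<forall>i<k. \<forall>j<k. i < j \<longrightarrow> T (f (Suc i)) (f (Suc j))"
      proof (intro allI impI)
        fix a b assume "a < k" "b < k" "a < b"
        then have "T' (f (Suc a)) (f (Suc b))" using trD[of "Suc a" "Suc b"] by simp
        then show "T (f (Suc a)) (f (Suc b))" using TVV inV \<open>a < k\<close> \<open>b < k\<close> by blast
      qed
    qed
    then show False using noTT by simp
  next
    assume nx: "\<not> (\<exists>i<Suc k. f i = x)" and ny: "\<exists>i<Suc k. f i = y"
    then obtain i where i: "i < Suc k" "f i = y" by blast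
    have ik: "i = k"
    proof (rule ccontr)
      assume "i \<noteq> k"
      then have "T' y (f k)" using trD[of i k] i by simp
      then show False using Ty nx by auto
    qed
    have "contains_TT V T k" unfolding contains_TT_def
    proof (intro exI conjI)
      show "inj_on f {0..<k}" by (rule inj_on_subset[OF inj]) auto
      have inV: "\<And>j. j < k \<Longrightarrow> f j \<in> V"
      proof -
        fix j assume "j < k"
        then have "f j \<noteq> y" using injD[of j k] i ik by auto
        moreover have "f j \<noteq> x" using nx \<open>j < k\<close> by auto
        ultimately show "f j \<in> V" using imgD[of j] \<open>j < k\<close> by auto
      qed
      then show "f ` {0..<k} \<subseteq> V" by auto
      show "\<forall>i<k. \<forall>j<k. i < j \<longrightarrow> T (f i) (f j)"
      proof (intro allI impI)
        fix a b assume "a < k" "b < k" "a < b"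
        then have "T' (f a) (f b)" using trD[of a b] by simp
        then show "T (f a) (f b)" using TVV inV \<open>a < k\<close> \<open>b < k\<close> by blast
      qed
    qed
    then show False using noTT by simp
  next
    assume nx: "\<not> (\<exists>i<Suc k. f i = x)" and ny: "\<not> (\<exists>i<Suc k. f i = y)"
    have "contains_TT V T k" unfolding contains_TT_def
    proof (intro exI conjI)
      show "inj_on f {0..<k}" by (rule inj_on_subset[OF inj]) auto
      have inV: "\<And>j. j < k \<Longrightarrow> f j \<in> V"
      proof -
        fix j assume "j < k"
        then have "j < Suc k" by simp
        then show "f j \<in> V" using imgD[of j] nx ny by blast
      qed
      then show "f ` {0..<k} \<subseteq> V" by auto
      show "\<forall>i<k. \<forall>j<k. i < j \<longrightarrow> T (f i) (f j)"
      proof (intro allI impI)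
        fix a b assume "a < k" "b < k" "a < b"
        then have "T' (f a) (f b)" using trD[of a b] by simp
        then show "T (f a) (f b)" using TVV inV \<open>a < k\<close> \<open>b < k\<close> by blast
      qed
    qed
    then show False using noTT by simp
  qed
qed

lemma ramsey_exists:
  assumes "l \<ge> 1"
  shows "\<forall>(V::nat set) T. tournament V T \<and> card V \<ge> 2^(l-1) \<longrightarrow> contains_TT V T l"
proof (intro allI impI)
  fix V :: "nat set" and T assume a: "tournament V T \<and> card V \<ge> 2^(l-1)"
  have "finite V" "\<forall>u\<in>V. \<forall>v\<in>V. u\<noteq>v \<longrightarrow> T u v \<or> T v u" using a unfolding tournament_def by (blast, blast)
  moreover obtain l' where l': "l = Suc l'" using assms by (cases l) auto
  ultimately have "\<exists>f. inj_on f {0..<Suc l'} \<and> f`{0..<Suc l'} \<subseteq> V \<and> (\<forall>i<Suc l'. \<forall>j<Suc l'. i<j \<longrightarrow> T (f i) (f j))"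
    using tt_exists[of V T l'] a by simp
  then show "contains_TT V T l" unfolding contains_TT_def l' .
qed

theorem proposition5p3:
  fixes \<chi> :: nat
  assumes "\<chi> \<ge> 3"
  shows "dir_ramsey \<chi> \<ge> dir_ramsey (\<chi> - 1) + 2"
proof -
  define P where "P = (\<lambda>l N. \<forall>(V::nat set) T. tournament V T \<and> card V \<ge> N \<longrightarrow> contains_TT V T l)"
  have R: "\<And>l. dir_ramsey l = (LEAST N. P l N)" unfolding dir_ramsey_def P_def by simp
  have ex: "\<And>l. l \<ge> 1 \<Longrightarrow> P l (2^(l-1))" unfolding P_def using ramsey_exists by blast
  have Pchi: "P \<chi> (dir_ramsey \<chi>)" unfolding R by (rule LeastI, rule ex) (use assms in simp)
  define k where "k = \<chi> - 1"
  have k2: "k \<ge> 2" and chik: "\<chi> = Suc k" using assms unfolding k_def by auto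
  have notP0: "\<not> P k 0"
  proof
    assume "P k 0"
    moreover have "tournament ({}::nat set) (\<lambda>_ _. False)" by (simp add: tournament_def)
    ultimately have "contains_TT ({}::nat set) (\<lambda>_ _. False) k" unfolding P_def by blast
    then show False using k2 unfolding contains_TT_def by auto
  qed
  have Rk: "P k (dir_ramsey k)" unfolding R by (rule LeastI, rule ex) (use k2 in simp)
  have Rk1: "dir_ramsey k \<ge> 1"
  proof (rule ccontr)
    assume "\<not> dir_ramsey k \<ge> 1"
    then have "dir_ramsey k = 0" by simp
    then show False using Rk notP0 by simp
  qed
  have "\<not> P k (dir_ramsey k - 1)"
  proof
    assume "P k (dir_ramsey k - 1)"
    then have "dir_ramsey k \<le> dir_ramsey k - 1" unfolding R by (rule Least_le)
    then show False using Rk1 by simp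
  qed
  then obtain V :: "nat set" and T where tV: "tournament V T" and cV: "card V \<ge> dir_ramsey k - 1"
    and noTT: "\<not> contains_TT V T k" unfolding P_def by blast
  have fV: "finite V" using tV unfolding tournament_def by blast
  obtain x where xV: "x \<notin> V" using ex_new_if_finite[OF infinite_UNIV_nat fV] by blast
  obtain y where yV: "y \<notin> insert x V" using ex_new_if_finite[OF infinite_UNIV_nat] fV by blast
  have yV': "y \<notin> V" and xy: "x \<noteq> y" using yV by auto
  define T' where "T' = (\<lambda>u w. T u w \<or> (u = x \<and> w \<in> V) \<or> (u \<in> V \<and> w = y) \<or> (u = y \<and> w = x))"
  have noTT': "\<not> contains_TT (insert x (insert y V)) T' (Suc k)"
    by (rule key_no_TT[OF tV noTT k2 xV yV' xy T'_def])
  have TV: "\<And>u w. T u w \<Longrightarrow> u \<in> V \<and> w \<in> V" using tV unfolding tournament_def by blast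
  have irr: "\<And>v. v \<in> V \<Longrightarrow> \<not> T v v" and tot: "\<And>u v. u \<in> V \<Longrightarrow> v \<in> V \<Longrightarrow> u \<noteq> v \<Longrightarrow> T u v \<longleftrightarrow> \<not> T v u"
    using tV unfolding tournament_def by blast+
  have tV': "tournament (insert x (insert y V)) T'"
    unfolding tournament_def
  proof (intro conjI)
    show "finite (insert x (insert y V))" using fV by simp
    show "\<forall>u v. T' u v \<longrightarrow> u \<in> insert x (insert y V) \<and> v \<in> insert x (insert y V)"
      unfolding T'_def using TV by blast
    show "\<forall>v\<in>insert x (insert y V). \<not> T' v v"
      unfolding T'_def using TV irr xV yV' xy by blast
    show "\<forall>u\<in>insert x (insert y V). \<forall>v\<in>insert x (insert y V). u \<noteq> v \<longrightarrow> T' u v = (\<not> T' v u)"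
      unfolding T'_def using TV tot xV yV' xy by blast
  qed
  have card': "card (insert x (insert y V)) = card V + 2" using fV xV yV' xy by simp
  show ?thesis
  proof (rule ccontr)
    assume "\<not> ?thesis"
    then have "dir_ramsey \<chi> \<le> card (insert x (insert y V))" using card' cV Rk1 unfolding k_def by simp
    then have "contains_TT (insert x (insert y V)) T' \<chi>" using Pchi tV' unfolding P_def by blast
    then show False using noTT' chik by simp
  qed
qed

end
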